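(* For all integers $m,n$ with $1\le m\le n$ and $n\ge 2$, \[mn-\frac{m^2(m-1)}{n-1}\ \le\ \operatorname{scp}(K_n-K_m)\ \le\ (2m-1)(n-m)+1.\]
   Context: $K_n-K_m$ denotes the graph obtained from the complete graph $K_n$ by deleting all edges (but no vertices) among a fixed set of $m$ of its vertices. A clique partition of a graph $G$ is a family $\mathcal{C}$ of cliques of $G$ such that every edge has both endpoints in exactly one member of $\mathcal{C}$; $\operatorname{scp}(G)$ is the minimum of $\sum_{C\in\mathcal{C}}|C|$ over all clique partitions $\mathcal{C}$ of $G$. *)

theory Defs
  imports Complex_Main
begin

text \<open>Simple graphs on a finite vertex set V with a symmetric irreflexive edge predicate E.\<close>

definition is_clique :: "'a set \<Rightarrow> ('a \<Rightarrow> 'a \<Rightarrow> bool) \<Rightarrow> 'a set \<Rightarrow> bool" where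
  "is_clique V E C \<longleftrightarrow> C \<subseteq> V \<and> (\<forall>u\<in>C. \<forall>v\<in>C. u \<noteq> v \<longrightarrow> E u v)"

definition is_clique_partition :: "'a set \<Rightarrow> ('a \<Rightarrow> 'a \<Rightarrow> bool) \<Rightarrow> 'a set set \<Rightarrow> bool" where
  "is_clique_partition V E \<C> \<longleftrightarrow>
     (\<forall>C\<in>\<C>. is_clique V E C) \<and>
     (\<forall>u\<in>V. \<forall>v\<in>V. E u v \<longrightarrow> (\<exists>!C. C \<in> \<C> \<and> u \<in> C \<and> v \<in> C))"

definition scp :: "'a set \<Rightarrow> ('a \<Rightarrow> 'a \<Rightarrow> bool) \<Rightarrow> nat" where
  "scp V E = (LEAST s. \<exists>\<C>. is_clique_partition V E \<C> \<and> s = (\<Sum>C\<in>\<C>. card C))"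

text \<open>K_n - K_m on vertices {0..<n}; the fixed set of m vertices is {0..<m}.\<close>
definition Kn_minus_Km_edge :: "nat \<Rightarrow> nat \<Rightarrow> nat \<Rightarrow> nat \<Rightarrow> bool" where
  "Kn_minus_Km_edge n m u v \<longleftrightarrow> u < n \<and> v < n \<and> u \<noteq> v \<and> \<not> (u < m \<and> v < m)"

end

theory Submission
  imports Defs
begin

lemma card_offdiag:
  assumes "finite A"
  shows "card {(x,y). x\<in>A \<and> y\<in>A \<and> x\<noteq>y} + card A = card A * card A"
proof -
  have e: "{(x,y). x\<in>A \<and> y\<in>A \<and> x\<noteq>y} = A \<times> A - (\<lambda>x. (x,x)) ` A" by auto
  have s: "(\<lambda>x. (x,x)) ` A \<subseteq> A \<times> A" by auto
  have c: "card ((\<lambda>x. (x,x)) ` A) = card A" by (rule card_image) (auto simp: inj_on_def)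
  have "card (A \<times> A - (\<lambda>x. (x,x)) ` A) = card A * card A - card A"
    using card_Diff_subset[OF finite_subset[OF s] s] assms c by (simp add: card_cartesian_product)
  moreover have "card A \<le> card A * card A" by (cases "card A") auto
  ultimately show ?thesis using e by simp
qed

lemma part_finite:
  assumes "is_clique_partition V E F" "finite V"
  shows "finite F"
proof -
  have "F \<subseteq> Pow V" using assms(1) unfolding is_clique_partition_def is_clique_def by auto
  thus ?thesis using assms(2) finite_subset by (metis finite_Pow_iff)
qed

lemma count1:
  assumes P: "is_clique_partition {0..<n} (Kn_minus_Km_edge n m) F"
  shows "(\<Sum>C\<in>F. card (C \<inter> {0..<m}) * card (C \<inter> {m..<n})) = m * (n - m)"
proof -
  have fin: "finite F" using part_finite[OF P] by simp
  let ?A = "\<lambda>C. (C \<inter> {0..<m}) \<times> (C \<inter> {m..<n})"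
  have U: "{0..<m} \<times> {m..<n} = (\<Union>C\<in>F. ?A C)"
  proof
    show "{0..<m} \<times> {m..<n} \<subseteq> (\<Union>C\<in>F. ?A C)"
    proof
      fix p assume "p \<in> {0..<m} \<times> {m..<n}"
      then obtain u x where p: "p = (u,x)" "u < m" "m \<le> x" "x < n" by auto
      have "Kn_minus_Km_edge n m u x" using p unfolding Kn_minus_Km_edge_def by auto
      then obtain C where "C \<in> F" "u \<in> C" "x \<in> C"
        using P p unfolding is_clique_partition_def by fastforce
      thus "p \<in> (\<Union>C\<in>F. ?A C)" using p by auto
    qed
  qed auto
  have D: "\<forall>C\<in>F. \<forall>C'\<in>F. C \<noteq> C' \<longrightarrow> ?A C \<inter> ?A C' = {}"
  proof (intro ballI impI)
    fix C C' assume C: "C \<in> F" "C' \<in> F" "C \<noteq> C'"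
    show "?A C \<inter> ?A C' = {}"
    proof (rule ccontr)
      assume "?A C \<inter> ?A C' \<noteq> {}"
      then obtain u x where ux: "u \<in> C" "u \<in> C'" "x \<in> C" "x \<in> C'" "u < m" "m \<le> x" "x < n" by auto
      have "Kn_minus_Km_edge n m u x" using ux unfolding Kn_minus_Km_edge_def by auto
      then have "\<exists>!C. C \<in> F \<and> u \<in> C \<and> x \<in> C"
        using P ux unfolding is_clique_partition_def by auto
      thus False using C ux by auto
    qed
  qed
  have "card ({0..<m} \<times> {m..<n}) = (\<Sum>C\<in>F. card (?A C))"
    unfolding U by (rule card_UN_disjoint[OF fin]) (use D in auto)
  thus ?thesis by (simp add: card_cartesian_product)
qed

lemma count2:
  assumes P: "is_clique_partition {0..<n} (Kn_minus_Km_edge n m) F"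
  shows "(\<Sum>C\<in>F. card {(x,y). x\<in>C \<inter> {m..<n} \<and> y\<in>C \<inter> {m..<n} \<and> x\<noteq>y})
         = card {(x,y). x\<in>{m..<n} \<and> y\<in>{m..<n} \<and> x\<noteq>y}"
proof -
  have fin: "finite F" using part_finite[OF P] by simp
  let ?A = "\<lambda>C. {(x,y). x\<in>C \<inter> {m..<n} \<and> y\<in>C \<inter> {m..<n} \<and> x\<noteq>y}"
  have U: "{(x,y). x\<in>{m..<n} \<and> y\<in>{m..<n} \<and> x\<noteq>y} = (\<Union>C\<in>F. ?A C)"
  proof
    show "{(x,y). x\<in>{m..<n} \<and> y\<in>{m..<n} \<and> x\<noteq>y} \<subseteq> (\<Union>C\<in>F. ?A C)"
    proof
      fix p assume "p \<in> {(x,y). x\<in>{m..<n} \<and> y\<in>{m..<n} \<and> x\<noteq>y}"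
      then obtain u x where p: "p = (u,x)" "m \<le> u" "u < n" "m \<le> x" "x < n" "u \<noteq> x" by auto
      have "Kn_minus_Km_edge n m u x" using p unfolding Kn_minus_Km_edge_def by auto
      then obtain C where "C \<in> F" "u \<in> C" "x \<in> C"
        using P p unfolding is_clique_partition_def by fastforce
      thus "p \<in> (\<Union>C\<in>F. ?A C)" using p by auto
    qed
  qed auto
  have D: "\<forall>C\<in>F. \<forall>C'\<in>F. C \<noteq> C' \<longrightarrow> ?A C \<inter> ?A C' = {}"
  proof (intro ballI impI)
    fix C C' assume C: "C \<in> F" "C' \<in> F" "C \<noteq> C'"
    show "?A C \<inter> ?A C' = {}"
    proof (rule ccontr)
      assume "?A C \<inter> ?A C' \<noteq> {}"
      then obtain u x where ux: "u \<in> C" "u \<in> C'" "x \<in> C" "x \<in> C'" "m \<le> u" "u < n" "m \<le> x" "x < n" "u \<noteq> x" by auto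
      have "Kn_minus_Km_edge n m u x" using ux unfolding Kn_minus_Km_edge_def by auto
      then have "\<exists>!C. C \<in> F \<and> u \<in> C \<and> x \<in> C"
        using P ux unfolding is_clique_partition_def by auto
      thus False using C ux by auto
    qed
  qed
  have fA: "\<forall>C\<in>F. finite (?A C)"
  proof
    fix C show "finite (?A C)"
      by (rule finite_subset[of _ "{m..<n} \<times> {m..<n}"]) auto
  qed
  show ?thesis
    unfolding U by (rule card_UN_disjoint[OF fin fA D, symmetric])
qed

lemma per_clique:
  fixes l :: real and p a d :: nat
  assumes "p \<le> 1" "d + a = a * a"
  shows "(1 + 2*l - l^2) * (real p * real a) - l^2 * real d \<le> real p + real a"
proof -
  have dr: "real d = real a * real a - real a" using assms(2)
    by (metis add_diff_cancel_right' of_nat_add of_nat_mult)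
  show ?thesis
  proof (cases "p = 0")
    case True
    have "l^2 * real d \<ge> 0" by simp
    moreover have "(1 + 2*l - l^2) * (real p * real a) = 0" using True by simp
    ultimately show ?thesis by linarith
  next
    case False
    then have "p = 1" using assms by auto
    have "(1 - l * real a)^2 \<ge> 0" by simp
    hence sq: "0 \<le> 1 - 2*l*real a + l^2*(real a*real a)" by (simp add: power2_eq_square algebra_simps)
    have e1: "l^2 * real d = l^2*(real a*real a) - l^2*real a" by (simp add: dr right_diff_distrib)
    have e2: "(1 + 2*l - l^2) * (real p * real a) = real a + 2*l*real a - l^2*real a"
      using \<open>p = 1\<close> by (simp add: algebra_simps)
    show ?thesis using sq e1 e2 \<open>p = 1\<close> by simp
  qed
qed

lemma alg:
  fixes M K :: real
  assumes "K > 0"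
  shows "(1 + 2*(M/K) - (M/K)^2) * (M * ((K+1) - M)) - (M/K)^2 * (((K+1) - M) * ((K+1) - M) - ((K+1) - M))
      = M * (K+1) - M^2 * (M - 1) / K"
proof -
  have "K \<noteq> 0" using assms by simp
  then show ?thesis by (simp add: field_simps power2_eq_square)
qed

lemma lower:
  assumes m1: "1 \<le> m" and mn: "m \<le> n" and n2: "2 \<le> n"
    and P: "is_clique_partition {0..<n} (Kn_minus_Km_edge n m) F"
  shows "real (m * n) - real (m^2 * (m - 1)) / real (n - 1) \<le> real (\<Sum>C\<in>F. card C)"
proof -
  have fin: "finite F" using part_finite[OF P] by simp
  define l :: real where "l = real m / (real n - 1)"
  define c where "c = 1 + 2*l - l^2"
  define pa where "pa = (\<lambda>C. real (card (C \<inter> {0..<m})) * real (card (C \<inter> {m..<n})))"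
  define dd where "dd = (\<lambda>C::nat set. real (card {(x,y). x\<in>C \<inter> {m..<n} \<and> y\<in>C \<inter> {m..<n} \<and> x\<noteq>y}))"
  have each: "c * pa C - l^2 * dd C \<le> real (card C)" if C: "C \<in> F" for C
  proof -
    have cl: "is_clique {0..<n} (Kn_minus_Km_edge n m) C" using P C unfolding is_clique_partition_def by auto
    have sub: "C \<subseteq> {0..<n}" using cl unfolding is_clique_def by auto
    have fC: "finite C" using sub finite_subset by blast
    have p1: "card (C \<inter> {0..<m}) \<le> 1"
    proof -
      have "\<forall>a1\<in>C \<inter> {0..<m}. \<forall>a2\<in>C \<inter> {0..<m}. a1 = a2"
      proof (intro ballI)
        fix a1 a2 assume a: "a1 \<in> C \<inter> {0..<m}" "a2 \<in> C \<inter> {0..<m}"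
        show "a1 = a2"
        proof (rule ccontr)
          assume "a1 \<noteq> a2"
          hence "Kn_minus_Km_edge n m a1 a2" using cl a unfolding is_clique_def by auto
          thus False using a unfolding Kn_minus_Km_edge_def by auto
        qed
      qed
      thus ?thesis using card_le_Suc0_iff_eq[of "C \<inter> {0..<m}"] fC by auto
    qed
    have cc: "card C = card (C \<inter> {0..<m}) + card (C \<inter> {m..<n})"
    proof -
      have "C = (C \<inter> {0..<m}) \<union> (C \<inter> {m..<n})" using sub by auto
      hence "card C = card ((C \<inter> {0..<m}) \<union> (C \<inter> {m..<n}))" by simp
      also have "\<dots> = card (C \<inter> {0..<m}) + card (C \<inter> {m..<n})"
        by (rule card_Un_disjoint) (use fC in auto)
      finally show ?thesis .
    qed
    have dA: "card {(x,y). x\<in>C \<inter> {m..<n} \<and> y\<in>C \<inter> {m..<n} \<and> x\<noteq>y} + card (C \<inter> {m..<n})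
        = card (C \<inter> {m..<n}) * card (C \<inter> {m..<n})"
      by (rule card_offdiag) (use fC in auto)
    show ?thesis using per_clique[OF p1 dA, of l] cc unfolding c_def pa_def dd_def by simp
  qed
  have S1: "(\<Sum>C\<in>F. pa C) = real m * (real n - real m)"
  proof -
    have "real (\<Sum>C\<in>F. card (C \<inter> {0..<m}) * card (C \<inter> {m..<n})) = real (m * (n - m))"
      using count1[OF P] by simp
    thus ?thesis unfolding pa_def using mn by (simp add: of_nat_diff)
  qed
  have S2: "(\<Sum>C\<in>F. dd C) = (real n - real m) * (real n - real m) - (real n - real m)"
  proof -
    have "real (\<Sum>C\<in>F. card {(x,y). x\<in>C \<inter> {m..<n} \<and> y\<in>C \<inter> {m..<n} \<and> x\<noteq>y})
       = real (card {(x,y). x\<in>{m..<n} \<and> y\<in>{m..<n} \<and> x\<noteq>y})"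
      using count2[OF P] by simp
    hence a: "(\<Sum>C\<in>F. dd C) = real (card {(x,y). x\<in>{m..<n} \<and> y\<in>{m..<n} \<and> x\<noteq>y})"
      unfolding dd_def by simp
    have b: "card {(x,y). x\<in>{m..<n} \<and> y\<in>{m..<n} \<and> x\<noteq>y} + card {m..<n} = card {m..<n} * card {m..<n}"
      by (rule card_offdiag) simp
    have "real (card {(x,y). x\<in>{m..<n} \<and> y\<in>{m..<n} \<and> x\<noteq>y}) + real (n - m) = real (n-m) * real (n-m)"
    proof -
      have b': "card {(x,y). x\<in>{m..<n} \<and> y\<in>{m..<n} \<and> x\<noteq>y} + (n-m) = (n-m)*(n-m)"
        using b by simp
      have "real (card {(x,y). x\<in>{m..<n} \<and> y\<in>{m..<n} \<and> x\<noteq>y} + (n-m)) = real ((n-m)*(n-m))"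
        by (simp only: b')
      thus ?thesis by (simp only: of_nat_add of_nat_mult)
    qed
    thus ?thesis using a mn by (simp add: of_nat_diff)
  qed
  have "(\<Sum>C\<in>F. c * pa C - l^2 * dd C) \<le> (\<Sum>C\<in>F. real (card C))"
    by (rule sum_mono) (rule each)
  hence ineq: "c * (real m * (real n - real m)) - l^2 * ((real n - real m) * (real n - real m) - (real n - real m))
      \<le> real (\<Sum>C\<in>F. card C)"
  proof -
    have "(\<Sum>C\<in>F. c * pa C - l^2 * dd C) = c * (\<Sum>C\<in>F. pa C) - l^2 * (\<Sum>C\<in>F. dd C)"
      by (simp only: sum_subtractf sum_distrib_left)
    moreover have "real (\<Sum>C\<in>F. card C) = (\<Sum>C\<in>F. real (card C))" by (rule of_nat_sum)
    ultimately show ?thesis using \<open>(\<Sum>C\<in>F. c * pa C - l^2 * dd C) \<le> (\<Sum>C\<in>F. real (card C))\<close>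
      unfolding S1 S2 by linarith
  qed
  have n1: "real n - 1 > 0" using n2 by simp
  have eq: "c * (real m * (real n - real m)) - l^2 * ((real n - real m) * (real n - real m) - (real n - real m))
      = real (m * n) - real (m^2 * (m - 1)) / real (n - 1)"
  proof -
    have r1: "real (n - 1) = real n - 1" using n2 by (simp add: of_nat_diff)
    have r2: "real (m^2 * (m - 1)) = real m ^ 2 * (real m - 1)" using m1 by (simp add: of_nat_diff)
    have rn: "real n = (real n - 1) + 1" by simp
    have "c * (real m * (real n - real m)) - l^2 * ((real n - real m) * (real n - real m) - (real n - real m))
      = real m * ((real n - 1)+1) - real m^2 * (real m - 1) / (real n - 1)"
      unfolding c_def l_def using alg[OF n1, of "real m"] by simp
    thus ?thesis unfolding r1 r2 by simp
  qed
  from ineq show ?thesis unfolding eq .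
qed



lemma upper_part:
  assumes m1: "1 \<le> m" and mn: "m \<le> n"
  defines "F \<equiv> insert (insert 0 {m..<n}) ((\<lambda>(i,j). {i,j}) ` ({1..<m} \<times> {m..<n}))"
  shows "is_clique_partition {0..<n} (Kn_minus_Km_edge n m) F"
    and "(\<Sum>C\<in>F. card C) = (2 * m - 1) * (n - m) + 1"
proof -
  let ?B = "insert 0 {m..<n}"
  let ?f = "\<lambda>(i::nat,j::nat). {i,j}"
  let ?P = "{1..<m} \<times> {m..<n}"
  have Fcases: "\<exists>i j. C = {i,j} \<and> 1 \<le> i \<and> i < m \<and> m \<le> j" if "C \<in> F" "C \<noteq> ?B" for C
  proof -
    have "C \<in> ?f ` ?P" using that unfolding F_def by simp
    then obtain x where x: "x \<in> ?P" "C = ?f x" by blast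
    then show ?thesis by (cases x) auto
  qed
  show "is_clique_partition {0..<n} (Kn_minus_Km_edge n m) F"
    unfolding is_clique_partition_def
  proof (intro conjI ballI impI)
    fix C assume "C \<in> F"
    then show "is_clique {0..<n} (Kn_minus_Km_edge n m) C"
      unfolding F_def is_clique_def Kn_minus_Km_edge_def using m1 mn by auto
  next
    fix u v assume uv: "u \<in> {0..<n}" "v \<in> {0..<n}" "Kn_minus_Km_edge n m u v"
    hence e: "u < n" "v < n" "u \<noteq> v" "\<not> (u < m \<and> v < m)" unfolding Kn_minus_Km_edge_def by auto
    show "\<exists>!C. C \<in> F \<and> u \<in> C \<and> v \<in> C"
    proof (cases "(u = 0 \<or> m \<le> u) \<and> (v = 0 \<or> m \<le> v)")
      case True
      show ?thesis
      proof (rule ex1I[of _ ?B])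
        show "?B \<in> F \<and> u \<in> ?B \<and> v \<in> ?B" using True e unfolding F_def by auto
      next
        fix C assume C: "C \<in> F \<and> u \<in> C \<and> v \<in> C"
        show "C = ?B"
        proof (rule ccontr)
          assume "C \<noteq> ?B"
          then obtain i j where "C = {i,j}" "1 \<le> i" "i < m" "m \<le> j" using C Fcases by blast
          thus False using C True e by auto
        qed
      qed
    next
      case False
      then have "(1 \<le> u \<and> u < m \<and> m \<le> v) \<or> (1 \<le> v \<and> v < m \<and> m \<le> u)" using e by auto
      then show ?thesis
      proof
        assume a: "1 \<le> u \<and> u < m \<and> m \<le> v"
        show ?thesis
        proof (rule ex1I[of _ "{u,v}"])
          have "(u,v) \<in> ?P" using a e by auto
          hence "{u,v} \<in> ?f ` ?P" by force
          thus "{u,v} \<in> F \<and> u \<in> {u,v} \<and> v \<in> {u,v}" unfolding F_def by auto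
        next
          fix C assume C: "C \<in> F \<and> u \<in> C \<and> v \<in> C"
          show "C = {u,v}"
          proof (cases "C = ?B")
            case True thus ?thesis using C a by auto
          next
            case False
            then obtain i j where "C = {i,j}" "1 \<le> i" "i < m" "m \<le> j" using C Fcases by blast
            thus ?thesis using C a by auto
          qed
        qed
      next
        assume a: "1 \<le> v \<and> v < m \<and> m \<le> u"
        show ?thesis
        proof (rule ex1I[of _ "{v,u}"])
          have "(v,u) \<in> ?P" using a e by auto
          hence "{v,u} \<in> ?f ` ?P" by force
          thus "{v,u} \<in> F \<and> u \<in> {v,u} \<and> v \<in> {v,u}" unfolding F_def by auto
        next
          fix C assume C: "C \<in> F \<and> u \<in> C \<and> v \<in> C"
          show "C = {v,u}"
          proof (cases "C = ?B")
            case True thus ?thesis using C a by auto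
          next
            case False
            then obtain i j where "C = {i,j}" "1 \<le> i" "i < m" "m \<le> j" using C Fcases by blast
            thus ?thesis using C a by auto
          qed
        qed
      qed
    qed
  qed
  have inj: "inj_on ?f ?P"
  proof (rule inj_onI)
    fix x y assume xy: "x \<in> ?P" "y \<in> ?P" "?f x = ?f y"
    obtain a b where x: "x = (a,b)" by (cases x)
    obtain c d where y: "y = (c,d)" by (cases y)
    have "a < b" "c < d" using xy x y by auto
    hence "a = c \<and> b = d" using xy(3) x y by (auto simp: doubleton_eq_iff)
    thus "x = y" using x y by simp
  qed
  have notin: "?B \<notin> ?f ` ?P"
  proof
    have h: "(0::nat) \<notin> C" if "C \<in> ?f ` ?P" for C using that m1 by auto
    assume "?B \<in> ?f ` ?P"
    from h[OF this] show False by simp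
  qed
  have fP: "finite (?f ` ?P)" by simp
  have s1: "(\<Sum>C\<in>F. card C) = card ?B + (\<Sum>C\<in>?f ` ?P. card C)"
    unfolding F_def using notin fP by (simp add: sum.insert)
  have s2: "(\<Sum>C\<in>?f ` ?P. card C) = (\<Sum>x\<in>?P. card (?f x))"
    by (rule sum.reindex[OF inj, unfolded comp_def])
  have s3: "(\<Sum>x\<in>?P. card (?f x)) = (\<Sum>x\<in>?P. 2)"
  proof (rule sum.cong)
    fix x assume "x \<in> ?P"
    then show "card (?f x) = 2" by (cases x) auto
  qed simp
  have s4: "(\<Sum>x\<in>?P. (2::nat)) = 2 * ((m - 1) * (n - m))" by (simp add: card_cartesian_product)
  have s5: "card ?B = (n - m) + 1" using m1 by simp
  obtain k where k: "m = Suc k" using m1 by (cases m) auto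
  have ar: "(n - m) + 1 + 2 * ((m - 1) * (n - m)) = (2 * m - 1) * (n - m) + 1"
    unfolding k by (simp add: algebra_simps)
  show "(\<Sum>C\<in>F. card C) = (2 * m - 1) * (n - m) + 1"
    using s1 s2 s3 s4 s5 ar by linarith
qed

theorem mainTheorem7:
  fixes m n :: nat
  assumes "1 \<le> m" and "m \<le> n" and "2 \<le> n"
  shows "real (m * n) - real (m^2 * (m - 1)) / real (n - 1)
           \<le> real (scp {0..<n} (Kn_minus_Km_edge n m))
       \<and> scp {0..<n} (Kn_minus_Km_edge n m) \<le> (2 * m - 1) * (n - m) + 1"
proof -
  let ?F = "insert (insert 0 {m..<n}) ((\<lambda>(i,j). {i,j}) ` ({1..<m} \<times> {m..<n}))"
  have p: "is_clique_partition {0..<n} (Kn_minus_Km_edge n m) ?F"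
    and s: "(\<Sum>C\<in>?F. card C) = (2 * m - 1) * (n - m) + 1"
    using upper_part[OF assms(1,2)] by auto
  let ?Q = "\<lambda>s. \<exists>\<C>. is_clique_partition {0..<n} (Kn_minus_Km_edge n m) \<C> \<and> s = (\<Sum>C\<in>\<C>. card C)"
  have ex: "?Q ((2 * m - 1) * (n - m) + 1)" using p s by metis
  have up: "scp {0..<n} (Kn_minus_Km_edge n m) \<le> (2 * m - 1) * (n - m) + 1"
    unfolding scp_def by (rule Least_le) (rule ex)
  have "?Q (scp {0..<n} (Kn_minus_Km_edge n m))"
    unfolding scp_def by (rule LeastI) (rule ex)
  then obtain G where G: "is_clique_partition {0..<n} (Kn_minus_Km_edge n m) G"
    and eq: "scp {0..<n} (Kn_minus_Km_edge n m) = (\<Sum>C\<in>G. card C)" by blast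
  show ?thesis using lower[OF assms G] eq up by simp
qed

end
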